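(* Assume $m\ge2$. There exists $g(x)\in A$ with $M_x^T=M_g$ if and only if either $f(x)=x^m\pm1$, or $m=2$ and $f(x)=x^2+ax-1$ for some $a\in\mathbb{F}$.
   Context: Let $\mathbb{F}$ be a finite field, $f(x)=x^m+\sum_{i=0}^{m-1}f_ix^i\in\mathbb{F}[x]$ monic of degree $m$, and $A=\mathbb{F}[x]/\langle f(x)\rangle$, elements identified with polynomials of degree $<m$. $M_x$ is the $m\times m$ companion matrix of $f$: its $i$-th row is the unit vector $e_{i+1}$ for $1\le i\le m-1$ and its last row is $(-f_0,-f_1,\ldots,-f_{m-1})$. For $g(x)=\sum_{i=0}^{m-1}a_ix^i\in A$, $M_g=\sum_{i=0}^{m-1}a_iM_x^i$. $M^T$ denotes the transpose. *)

theory Defs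
  imports "Jordan_Normal_Form.Matrix" "HOL-Computational_Algebra.Polynomial"
begin

definition companion_mat :: "'a::field poly \<Rightarrow> 'a mat" where
  "companion_mat f = (let m = degree f in
     mat m m (\<lambda>(i,j). if i < m - 1 then (if j = i + 1 then 1 else 0) else - coeff f j))"

definition elem_mat :: "'a::field poly \<Rightarrow> 'a poly \<Rightarrow> 'a mat" where
  "elem_mat f g = (let m = degree f in
     mat m m (\<lambda>(i,j). \<Sum>k<m. coeff g k * (companion_mat f ^\<^sub>m k) $$ (i,j)))"

end

theory Submission
  imports Defs
begin

lemma comp_carrier: "companion_mat f \<in> carrier_mat (degree f) (degree f)"
  by (simp add: companion_mat_def Let_def)

lemma comp_dims[simp]: "dim_row (companion_mat f) = degree f" "dim_col (companion_mat f) = degree f"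
  by (simp_all add: companion_mat_def Let_def)

lemma comp_idx: "i < degree f \<Longrightarrow> j < degree f \<Longrightarrow> companion_mat f $$ (i,j) =
   (if i < degree f - 1 then (if j = i+1 then 1 else 0) else - coeff f j)"
  by (simp add: companion_mat_def Let_def)

lemma pow_suc_idx:
  assumes A: "A \<in> carrier_mat n n" and "i < n" "j < n"
  shows "(A ^\<^sub>m Suc k) $$ (i,j) = (\<Sum>l<n. (A ^\<^sub>m k) $$ (i,l) * A $$ (l,j))"
  using assms by (simp add: scalar_prod_def atLeast0LessThan)

lemma sum_single: assumes "(l::nat) < n" shows "(\<Sum>x<n. (if x = l then (1::'a::field) else 0) * b x) = b l"
proof -
  have "(\<Sum>x<n. (if x = l then (1::'a) else 0) * b x) = (\<Sum>x<n. if x = l then b x else 0)"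
    by (rule sum.cong) auto
  then show ?thesis using assms by simp
qed

lemma L1:
  fixes f :: "'a::field poly"
  assumes "i + k < degree f" "j < degree f"
  shows "(companion_mat f ^\<^sub>m k) $$ (i,j) = (if j = i + k then 1 else 0)"
  using assms
proof (induction k arbitrary: j)
  case 0
  then show ?case by simp
next
  case (Suc k)
  have "(companion_mat f ^\<^sub>m Suc k) $$ (i,j) =
     (\<Sum>l<degree f. (companion_mat f ^\<^sub>m k) $$ (i,l) * companion_mat f $$ (l,j))"
    by (rule pow_suc_idx[OF comp_carrier]) (use Suc.prems in auto)
  also have "\<dots> = (\<Sum>l<degree f. (if l = i + k then 1 else 0) * companion_mat f $$ (l,j))"
    by (rule sum.cong) (use Suc in auto)
  also have "\<dots> = companion_mat f $$ (i+k,j)"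
    using Suc by (simp add: sum_single)
  also have "\<dots> = (if j = i + Suc k then 1 else 0)"
    using Suc by (simp add: comp_idx)
  finally show ?case .
qed

lemma L2:
  fixes f :: "'a::field poly"
  assumes "i + Suc k = degree f" "j < degree f"
  shows "(companion_mat f ^\<^sub>m Suc k) $$ (i,j) = - coeff f j"
proof -
  have "(companion_mat f ^\<^sub>m Suc k) $$ (i,j) =
     (\<Sum>l<degree f. (companion_mat f ^\<^sub>m k) $$ (i,l) * companion_mat f $$ (l,j))"
    by (rule pow_suc_idx[OF comp_carrier]) (use assms in auto)
  also have "\<dots> = (\<Sum>l<degree f. (if l = i + k then 1 else 0) * companion_mat f $$ (l,j))"
    by (rule sum.cong) (use assms in \<open>auto simp: L1\<close>)
  also have "\<dots> = companion_mat f $$ (i+k,j)"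
    using assms by (simp add: sum_single)
  also have "\<dots> = - coeff f j"
    using assms by (simp add: comp_idx)
  finally show ?thesis .
qed

lemma sum_single2: assumes "(l::nat) < n"
  shows "(\<Sum>x<n. (if l = x then (a::'a::field) else 0) * b x) = a * b l"
proof -
  have "(\<Sum>x<n. (if l = x then a else 0) * b x) = (\<Sum>x<n. if x = l then a * b x else 0)"
    by (rule sum.cong) auto
  then show ?thesis using assms by simp
qed

lemma sum_single3: assumes "(l::nat) < n"
  shows "(\<Sum>x<n. b x * (if l = x then (1::'a::field) else 0)) = b l"
proof -
  have "(\<Sum>x<n. b x * (if l = x then (1::'a) else 0)) = (\<Sum>x<n. if x = l then b x else 0)"
    by (rule sum.cong) auto
  then show ?thesis using assms by simp
qed

lemma elem_idx: "i < degree f \<Longrightarrow> j < degree f \<Longrightarrow>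
  elem_mat f g $$ (i,j) = (\<Sum>k<degree f. coeff g k * (companion_mat f ^\<^sub>m k) $$ (i,j))"
  by (simp add: elem_mat_def Let_def)

lemma elem_dims: "dim_row (elem_mat f g) = degree f" "dim_col (elem_mat f g) = degree f"
  by (simp_all add: elem_mat_def Let_def)

lemma L3:
  fixes f :: "'a::field poly"
  assumes cf: "\<And>j. 0 < j \<Longrightarrow> j < degree f \<Longrightarrow> coeff f j = 0"
    and k: "k < degree f" and i: "i < degree f" and j: "j < degree f"
  shows "(companion_mat f ^\<^sub>m k) $$ (i,j) = (if i + k < degree f then (if j = i + k then 1 else 0)
     else - coeff f 0 * (if j = i + k - degree f then 1 else 0))"
  using k j
proof (induction k arbitrary: j)
  case 0
  then show ?case using i L1[of i 0 f j] by simp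
next
  case (Suc k)
  show ?case
  proof (cases "i + Suc k < degree f")
    case True
    then show ?thesis using L1[OF True Suc.prems(2)] by simp
  next
    case F: False
    show ?thesis
    proof (cases "i + Suc k = degree f")
      case True
      then show ?thesis using L2[OF True Suc.prems(2)] cf[of j] Suc.prems by (cases "j = 0") auto
    next
      case False
      with F have big: "degree f \<le> i + k" by simp
      have "(companion_mat f ^\<^sub>m Suc k) $$ (i,j) =
         (\<Sum>l<degree f. (companion_mat f ^\<^sub>m k) $$ (i,l) * companion_mat f $$ (l,j))"
        by (rule pow_suc_idx[OF comp_carrier]) (use i Suc.prems in auto)
      also have "\<dots> = (\<Sum>l<degree f. (if i + k - degree f = l then - coeff f 0 else 0) * companion_mat f $$ (l,j))"
        by (rule sum.cong) (use Suc big in auto)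
      also have "\<dots> = - coeff f 0 * companion_mat f $$ (i + k - degree f,j)"
        by (rule sum_single2) (use big i Suc.prems in auto)
      also have "\<dots> = - coeff f 0 * (if j = i + Suc k - degree f then 1 else 0)"
      proof -
        have a: "i + k - degree f < degree f - 1" using i Suc.prems big by linarith
        have b: "i + Suc k - degree f = i + k - degree f + 1" using big by linarith
        show ?thesis using a b i Suc.prems by (simp add: comp_idx)
      qed
      finally show ?thesis using F by simp
    qed
  qed
qed


lemma T1:
  fixes f :: "'a::field poly"
  assumes dm: "degree f = m" and T: "transpose_mat (companion_mat f) = elem_mat f g"
   and "i < m" "j < m"
  shows "companion_mat f $$ (j,i) = elem_mat f g $$ (i,j)"
  proof -
    have "transpose_mat (companion_mat f) $$ (i,j) = companion_mat f $$ (j,i)"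
      using dm \<open>i < m\<close> \<open>j < m\<close> by simp
    then show ?thesis unfolding T by simp
  qed

lemma T2:
  fixes f :: "'a::field poly"
  assumes dm: "degree f = m" and m2: "m \<ge> 2" and "k < m"
  shows "elem_mat f g $$ (0,k) = coeff g k"
  proof -
    have "elem_mat f g $$ (0,k) = (\<Sum>l<m. coeff g l * (if k = l then 1 else 0))"
      using assms by (auto simp: elem_idx L1 intro!: sum.cong)
    also have "\<dots> = coeff g k" using assms by (simp add: sum_single3)
    finally show ?thesis .
  qed

lemma forward:
  fixes f :: "'a::field poly" and m :: nat
  assumes lc: "lead_coeff f = 1" and dm: "degree f = m" and m2: "m \<ge> 2"
    and T: "transpose_mat (companion_mat f) = elem_mat f g"
  shows "f = monom 1 m + 1 \<or> f = monom 1 m - 1 \<or> (m = 2 \<and> (\<exists>a. f = [:-1, a, 1:]))"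
proof -
  define c where "c = coeff f 0"
  have Tij: "companion_mat f $$ (j,i) = elem_mat f g $$ (i,j)" if "i < m" "j < m" for i j
    using T1[OF dm T that] .
  have gk: "coeff g k = (if k = m - 1 then - c else 0)" if "k < m" for k
  proof -
    have "elem_mat f g $$ (0,k) = coeff g k" using T2[OF dm m2 that] .
    then have "coeff g k = companion_mat f $$ (k,0)" using Tij[of 0 k] that m2 by simp
    then show ?thesis using that m2 dm by (auto simp: comp_idx c_def)
  qed
  have row1: "c * coeff f j = (if j < m - 1 then (if j = 0 then 1 else 0) else - coeff f 1)" if "j < m" for j
  proof -
    have "elem_mat f g $$ (1,j) = (\<Sum>l<m. (if m - 1 = l then - c else 0) * (companion_mat f ^\<^sub>m l) $$ (1,j))"
      using that m2 dm gk by (auto simp: elem_idx intro!: sum.cong)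
    also have "\<dots> = - c * (companion_mat f ^\<^sub>m (m-1)) $$ (1,j)"
      by (rule sum_single2) (use m2 in auto)
    also have "(companion_mat f ^\<^sub>m (m-1)) = (companion_mat f ^\<^sub>m Suc (m-2))"
    proof -
      have e: "m - 1 = Suc (m - 2)" using m2 by arith
      show ?thesis by (simp only: e)
    qed
    also have "\<dots> $$ (1,j) = - coeff f j"
      by (rule L2) (use m2 dm that in auto)
    finally have "c * coeff f j = companion_mat f $$ (j,1)" using Tij[of 1 j] that m2 by simp
    then show ?thesis using that m2 dm by (auto simp: comp_idx)
  qed
  have cc: "c * c = 1" using row1[of 0] m2 by (simp add: c_def)
  have c01: "c = 1 \<or> c = -1"
  proof -
    have "(c - 1) * (c + 1) = 0" using cc by (simp add: algebra_simps)
    then show ?thesis by (auto simp: eq_neg_iff_add_eq_0)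
  qed
  have cnz: "c \<noteq> 0" using cc by auto
  have mid: "coeff f j = 0" if "0 < j" "j < m - 1" for j
    using row1[of j] that cnz by simp
  have fm: "coeff f m = 1" using lc dm by simp
  have fbig: "coeff f n = 0" if "n > m" for n using that dm by (simp add: coeff_eq_0)
  show ?thesis
  proof (cases "m = 2")
    case m: True
    define a where "a = coeff f 1"
    have fe: "f = [:c, a, 1:]"
    proof (rule poly_eqI)
      fix n show "coeff f n = coeff [:c, a, 1:] n"
      proof -
        have "n = 0 \<or> n = 1 \<or> n = 2 \<or> n > 2" by arith
        moreover have "coeff [:c, a, 1:] n = 0" if "n > 2" using that by (intro coeff_eq_0) simp
        ultimately show ?thesis using fm fbig[of n] m
          by (elim disjE) (simp_all add: c_def a_def numeral_2_eq_2)
      qed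
    qed
    have r: "c * a = - a" using row1[of 1] m by (simp add: a_def)
    from c01 show ?thesis
    proof
      assume c1: "c = 1"
      show ?thesis
      proof (cases "a = 0")
        case True
        have "f = monom 1 m + 1"
          by (rule poly_eqI) (simp add: fe c1 True m coeff_monom coeff_pCons numeral_2_eq_2 split: nat.splits)
        then show ?thesis by simp
      next
        case False
        have "(1 + 1) * a = 0" using r c1 by (simp add: algebra_simps eq_neg_iff_add_eq_0)
        hence "1 + 1 = (0::'a)" using False by simp
        hence "c = -1" using c1 by (simp add: eq_neg_iff_add_eq_0)
        then show ?thesis using fe m by auto
      qed
    next
      assume "c = -1" then show ?thesis using fe m by auto
    qed
  next
    case False
    hence m3: "m \<ge> 3" using m2 by simp
    have f1: "coeff f 1 = 0" using mid[of 1] m3 by simp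
    have fl: "coeff f (m-1) = 0" using row1[of "m-1"] m3 f1 cnz by simp
    have zero: "coeff f j = 0" if "0 < j" "j < m" for j
      using mid[of j] fl that by (cases "j = m - 1") auto
    have fe: "f = monom 1 m + [:c:]"
    proof (rule poly_eqI)
      fix n show "coeff f n = coeff (monom 1 m + [:c:]) n"
        using fm fbig zero m3 by (cases "n = 0"; cases "n < m"; cases "n = m";
           simp add: c_def coeff_monom coeff_pCons split: nat.splits)
    qed
    from c01 show ?thesis
    proof
      assume "c = 1" then show ?thesis using fe by (simp add: one_pCons)
    next
      assume "c = -1" then show ?thesis using fe by (simp add: one_pCons)
    qed
  qed
qed


lemma backward1:
  fixes f :: "'a::field poly"
  assumes dm: "degree f = m" and m2: "m \<ge> 2" and fe: "f = monom 1 m + [:c:]" and cc: "c * c = 1"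
  shows "transpose_mat (companion_mat f) = elem_mat f (monom (-c) (m-1))"
proof -
  have c0: "coeff f 0 = c" using fe m2 by (simp add: coeff_monom)
  have cf: "coeff f j = 0" if "0 < j" "j < degree f" for j
    using fe dm that by (auto simp: coeff_monom coeff_pCons split: nat.splits)
  have dM: "dim_row (companion_mat f) = m" "dim_col (companion_mat f) = m"
    using dm by auto
  show ?thesis
  proof (rule eq_matI)
    show "dim_row (transpose_mat (companion_mat f)) = dim_row (elem_mat f (monom (-c) (m-1)))"
      using dM dm by (simp add: elem_dims)
    show "dim_col (transpose_mat (companion_mat f)) = dim_col (elem_mat f (monom (-c) (m-1)))"
      using dM dm by (simp add: elem_dims)
    fix i j assume "i < dim_row (elem_mat f (monom (-c) (m-1)))" "j < dim_col (elem_mat f (monom (-c) (m-1)))"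
    hence i: "i < m" and j: "j < m" using dm by (auto simp: elem_dims)
    have "elem_mat f (monom (-c) (m-1)) $$ (i,j) =
        (\<Sum>k<m. coeff (monom (-c) (m-1)) k * (companion_mat f ^\<^sub>m k) $$ (i,j))"
      using elem_idx[of i f j] i j dm by simp
    also have "\<dots> = (\<Sum>k<m. (if m - 1 = k then -c else 0) * (companion_mat f ^\<^sub>m k) $$ (i,j))"
      by (simp add: coeff_monom)
    also have "\<dots> = - c * (companion_mat f ^\<^sub>m (m-1)) $$ (i,j)"
      by (rule sum_single2) (use m2 in auto)
    also have "(companion_mat f ^\<^sub>m (m-1)) $$ (i,j) = (if i + (m-1) < degree f then (if j = i + (m-1) then 1 else 0)
     else - coeff f 0 * (if j = i + (m-1) - degree f then 1 else 0))"
      by (rule L3) (use cf i j dm m2 in auto)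
    also have "- c * \<dots> = companion_mat f $$ (j,i)"
    proof (cases "i = 0")
      case True
      then show ?thesis using j m2 dm c0 by (auto simp: comp_idx)
    next
      case False
      have e: "i + (m - 1) - m = i - 1" using False m2 by arith
      have ne: "\<not> i + (m-1) < m" using False by arith
      have "- c * (if i + (m-1) < degree f then (if j = i + (m-1) then 1 else 0)
         else - coeff f 0 * (if j = i + (m-1) - degree f then 1 else 0)) = (if j = i - 1 then 1 else 0)"
        using ne e dm c0 cc by simp
      also have "\<dots> = companion_mat f $$ (j,i)"
        using False i j dm cf[of i] by (auto simp: comp_idx)
      finally show ?thesis .
    qed
    finally show "transpose_mat (companion_mat f) $$ (i,j) = elem_mat f (monom (-c) (m-1)) $$ (i,j)"
      using i j dM by simp
  qed
qed

lemma backward2: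
  fixes f :: "'a::field poly"
  assumes fe: "f = [:-1, a, 1:]"
  shows "transpose_mat (companion_mat f) = elem_mat f (monom 1 1)"
proof -
  have dm: "degree f = 2" using fe by simp
  have dM: "dim_row (companion_mat f) = 2" "dim_col (companion_mat f) = 2"
    using dm by auto
  show ?thesis
  proof (rule eq_matI)
    show "dim_row (transpose_mat (companion_mat f)) = dim_row (elem_mat f (monom 1 1))"
      using dM dm by (simp add: elem_dims)
    show "dim_col (transpose_mat (companion_mat f)) = dim_col (elem_mat f (monom 1 1))"
      using dM dm by (simp add: elem_dims)
    fix i j assume "i < dim_row (elem_mat f (monom 1 1))" "j < dim_col (elem_mat f (monom 1 1))"
    hence i: "i < 2" and j: "j < 2" using dm by (auto simp: elem_dims)
    have "elem_mat f (monom 1 1) $$ (i,j) =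
        (\<Sum>k<2. coeff (monom 1 1) k * (companion_mat f ^\<^sub>m k) $$ (i,j))"
      using elem_idx[of i f j] i j dm by simp
    also have "\<dots> = (companion_mat f ^\<^sub>m Suc 0) $$ (i,j)"
      by (simp add: numeral_2_eq_2 coeff_monom)
    also have "\<dots> = companion_mat f $$ (j,i)"
    proof -
      have "i = 0 \<or> i = 1" "j = 0 \<or> j = 1" using i j by auto
      then show ?thesis
        using L1[of 0 "Suc 0" f j] L2[of 1 0 f j] j dm fe
        by (auto simp: comp_idx)
    qed
    finally show "transpose_mat (companion_mat f) $$ (i,j) = elem_mat f (monom 1 1) $$ (i,j)"
      using i j dM by simp
  qed
qed

theorem mainTheorem12:
  fixes f :: "'a::{field,finite} poly" and m :: nat
  assumes "lead_coeff f = 1" and "degree f = m" and "m \<ge> 2"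
  shows "(\<exists>g :: 'a poly. degree g < m \<and> transpose_mat (companion_mat f) = elem_mat f g)
     \<longleftrightarrow> (f = monom 1 m + 1 \<or> f = monom 1 m - 1 \<or> (m = 2 \<and> (\<exists>a. f = [:-1, a, 1:])))"
proof
  assume "\<exists>g :: 'a poly. degree g < m \<and> transpose_mat (companion_mat f) = elem_mat f g"
  then obtain g :: "'a poly" where "transpose_mat (companion_mat f) = elem_mat f g" by blast
  then show "f = monom 1 m + 1 \<or> f = monom 1 m - 1 \<or> (m = 2 \<and> (\<exists>a. f = [:-1, a, 1:]))"
    using forward[OF assms] by blast
next
  have dg: "degree (monom c (m - 1)) < m" for c :: 'a
    using degree_monom_le[of c "m-1"] assms(3) by linarith
  assume "f = monom 1 m + 1 \<or> f = monom 1 m - 1 \<or> (m = 2 \<and> (\<exists>a. f = [:-1, a, 1:]))"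
  then show "\<exists>g :: 'a poly. degree g < m \<and> transpose_mat (companion_mat f) = elem_mat f g"
  proof (elim disjE)
    assume "f = monom 1 m + 1"
    hence "f = monom 1 m + [:1:]" by (simp add: one_pCons)
    then show ?thesis using backward1[OF assms(2,3), of 1] dg by auto
  next
    assume "f = monom 1 m - 1"
    hence "f = monom 1 m + [:-1:]"
      by (simp add: one_pCons diff_conv_add_uminus)
    then show ?thesis using backward1[OF assms(2,3), of "-1"] dg by auto
  next
    assume "m = 2 \<and> (\<exists>a. f = [:-1, a, 1:])"
    then obtain a where m: "m = 2" and fe: "f = [:-1, a, 1:]" by blast
    have "degree (monom (1::'a) 1) < m" using m by (simp add: degree_monom_eq)
    then show ?thesis using backward2[OF fe] by blast
  qed
qed

end
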